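(* Let $K>0$, $\mu>0$, $h>0$, and $r=h/H\in(0,1)$. Consider the homogeneous controlled patch problem (context) and suppose that, for some $k>0$, $T(x,t)=e^{-Kk^2t}\phi(x)$ is a solution with $\phi\not\equiv 0$ odd of the form $$\phi(x)=\begin{cases}A\sin kx, & |x|<h/4,\\ \pm C+D\sin[k(x\mp\tfrac h2)]\pm E\cos[k(x\mp \tfrac h2)], & h/4\le \pm x\le 3h/4,\\ B\sin[k(x\mp h)], & 3h/4\le \pm x\le h,\end{cases}$$ with $\phi,\phi'$ continuous and $2h$-periodic. Then $$\sin\frac{kh}{2}\left[\frac{2}{kh}\sin\frac{kh}{2}+\Big(\frac{k^2h^2}{\mu}-1\Big)\cos\frac{kh}{2}\right]=0 .$$
   Context: Homogeneous controlled patch problem (governing perturbations about an equilibrium). A field $T(x,t)$, $2h$-periodic in $x$, satisfies $T_t=KT_{xx}+\frac{K\mu}{h^2}g(x,T)$, where $g$ is piecewise constant: on the right action region $h/4<x<3h/4$, $g=T_{\mathrm{int}}-\frac2h\int_{h/4}^{3h/4}T\,dx$; on the left action region $-3h/4<x<-h/4$, $g=T_{\mathrm{int}}-\frac2h\int_{-3h/4}^{-h/4}T\,dx$; and $g=0$ on the core $|x|<h/4$ and buffer $3h/4<|x|\le h$. Here $T_c=\frac2h\int_{-h/4}^{h/4}T\,dx$ is the core average and, with $r=h/H$, $$T_{\mathrm{int}}=T_c\,\frac{1-13r^2/48}{1-r^2/48}$$ (this is the action-region average of the parabolic interpolant through zero boundary values at $x=\pm H$ with core average $T_c$). Solutions are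 understood piecewise, with $T,T_x$ continuous across region boundaries. *)

theory Defs
  imports "HOL-Analysis.Analysis"
begin

definition core_avg :: "real \<Rightarrow> (real \<Rightarrow> real \<Rightarrow> real) \<Rightarrow> real \<Rightarrow> real" where
  "core_avg h T t = 2 / h * integral {-h/4..h/4} (\<lambda>x. T x t)"

definition T_int :: "real \<Rightarrow> real \<Rightarrow> (real \<Rightarrow> real \<Rightarrow> real) \<Rightarrow> real \<Rightarrow> real" where
  "T_int h H T t = core_avg h T t * (1 - 13 * (h/H)^2 / 48) / (1 - (h/H)^2 / 48)"

definition patch_g :: "real \<Rightarrow> real \<Rightarrow> (real \<Rightarrow> real \<Rightarrow> real) \<Rightarrow> real \<Rightarrow> real \<Rightarrow> real" where
  "patch_g h H T x t =
     (if h/4 < x \<and> x < 3*h/4 then T_int h H T t - 2 / h * integral {h/4..3*h/4} (\<lambda>y. T y t)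
      else if -3*h/4 < x \<and> x < -h/4 then T_int h H T t - 2 / h * integral {-3*h/4..-h/4} (\<lambda>y. T y t)
      else 0)"

definition patch_region :: "real \<Rightarrow> real \<Rightarrow> bool" where
  "patch_region h x \<longleftrightarrow>
     \<bar>x\<bar> < h/4 \<or> (h/4 < x \<and> x < 3*h/4) \<or> (-3*h/4 < x \<and> x < -h/4)
     \<or> (3*h/4 < \<bar>x\<bar> \<and> \<bar>x\<bar> \<le> h)"

text \<open>T solves T_t = K T_xx + K mu/h^2 g(x,T) piecewise: T(.,t) is differentiable everywhere
  (so T, T_x continuous across region boundaries), and inside each region T_xx exists and the
  equation holds.\<close>
definition patch_solution :: "real \<Rightarrow> real \<Rightarrow> real \<Rightarrow> real \<Rightarrow> (real \<Rightarrow> real \<Rightarrow> real) \<Rightarrow> bool" where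
  "patch_solution K \<mu> h H T \<longleftrightarrow>
     (\<forall>t x. (\<lambda>y. T y t) differentiable (at x)) \<and>
     (\<forall>t. continuous_on UNIV (deriv (\<lambda>y. T y t))) \<and>
     (\<forall>t x. T (x + 2*h) t = T x t) \<and>
     (\<forall>t x. patch_region h x \<longrightarrow>
        (\<exists>Txx. (deriv (\<lambda>y. T y t) has_real_derivative Txx) (at x) \<and>
               ((\<lambda>s. T x s) has_real_derivative (K * Txx + K * \<mu> / h^2 * patch_g h H T x t)) (at t)))"

end

theory Submission imports Defs begin

lemma deriv_match:
  fixes \<phi> f g :: "real \<Rightarrow> real"
  assumes d: "(\<phi> has_real_derivative L) (at x0)" and df: "(f has_real_derivative f') (at x0)"
    and dg: "(g has_real_derivative g') (at x0)"
    and ab: "a < x0" "x0 < b" and ef: "\<forall>x\<in>{a..x0}. \<phi> x = f x" and eg: "\<forall>x\<in>{x0..b}. \<phi> x = g x"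
  shows "f' = g'"
proof -
  have "(f has_real_derivative L) (at x0 within {a..x0})"
    by (rule has_field_derivative_transform_within[OF has_field_derivative_at_within[OF d], of 1])
      (use ef ab in auto)
  moreover have "(f has_real_derivative f') (at x0 within {a..x0})"
    using df has_field_derivative_at_within by blast
  ultimately have 1: "f' = L"
    using vector_derivative_unique_within_closed_interval[of a x0 x0 f L f'] ab
    by (auto simp: has_real_derivative_iff_has_vector_derivative)
  have "(g has_real_derivative L) (at x0 within {x0..b})"
    by (rule has_field_derivative_transform_within[OF has_field_derivative_at_within[OF d], of 1])
      (use eg ab in auto)
  moreover have "(g has_real_derivative g') (at x0 within {x0..b})"
    using dg has_field_derivative_at_within by blast
  ultimately have 2: "g' = L"
    using vector_derivative_unique_within_closed_interval[of x0 b x0 g L g'] ab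
    by (auto simp: has_real_derivative_iff_has_vector_derivative)
  show ?thesis using 1 2 by simp
qed

lemma value_match:
  fixes \<phi> f :: "real \<Rightarrow> real"
  assumes c: "isCont \<phi> p" and a: "a < p" and cf: "isCont f p"
    and e: "\<forall>x. a < x \<and> x < p \<longrightarrow> \<phi> x = f x"
  shows "\<phi> p = f p"
proof -
  have l1: "(\<phi> \<longlongrightarrow> \<phi> p) (at_left p)"
    using c by (simp add: isCont_def filterlim_at_split)
  have l2: "(f \<longlongrightarrow> f p) (at_left p)"
    using cf by (simp add: isCont_def filterlim_at_split)
  have ev: "eventually (\<lambda>x. f x = \<phi> x) (at_left p)"
    using eventually_mono[OF eventually_at_left_real[OF a]] e by fastforce
  have "(\<phi> \<longlongrightarrow> f p) (at_left p)"
    using tendsto_cong[OF ev] l2 by blast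
  then show ?thesis using l1 tendsto_unique trivial_limit_at_left_real by blast
qed

lemma periodic_nat:
  fixes \<phi> :: "real \<Rightarrow> real"
  assumes p: "\<forall>x. \<phi> (x + 2*h) = \<phi> x"
  shows "\<phi> (x + 2*h*real n) = \<phi> x"
proof (induction n)
  case (Suc n)
  have "\<phi> (x + 2*h*real (Suc n)) = \<phi> ((x + 2*h*real n) + 2*h)" by (simp add: algebra_simps)
  then show ?case using p Suc by simp
qed simp

lemma periodic_int:
  fixes \<phi> :: "real \<Rightarrow> real"
  assumes p: "\<forall>x. \<phi> (x + 2*h) = \<phi> x"
  shows "\<phi> (x + 2*h*real_of_int z) = \<phi> x"
proof (cases "z \<ge> 0")
  case True
  then show ?thesis using periodic_nat[OF p, of x "nat z"] by simp
next
  case False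
  have "\<phi> (x + 2*h*real_of_int z) = \<phi> ((x + 2*h*real_of_int z) + 2*h*real (nat (-z)))"
    using periodic_nat[OF p] by simp
  also have "\<dots> = \<phi> x" using False by simp
  finally show ?thesis .
qed


lemma alg_final:
  fixes \<mu> p E Q S :: real
  assumes "\<mu> > 0" "p > 0" and hy: "- E * Q * p^2 = - \<mu> * E * Q + \<mu> * 2 * E * S / p"
  shows "E * (2 / p * S + (p^2 / \<mu> - 1) * Q) = 0"
proof -
  have "E * (2 / p * S + (p^2 / \<mu> - 1) * Q) = (\<mu> * 2 * E * S / p + E * Q * p^2 - \<mu> * E * Q) / \<mu>"
    using assms(1,2) by (simp add: field_simps)
  also have "\<dots> = 0" using hy by simp
  finally show ?thesis .
qed

theorem mainTheorem3:
  fixes K \<mu> h H k A B C D E :: real and \<phi> :: "real \<Rightarrow> real"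
  assumes K: "K > 0" and mu: "\<mu> > 0" and h: "h > 0"
    and r0: "0 < h / H" and r1: "h / H < 1"
    and k: "k > 0"
    and odd: "\<forall>x. \<phi> (-x) = - \<phi> x"
    and nonzero: "\<exists>x. \<phi> x \<noteq> 0"
    and periodic: "\<forall>x. \<phi> (x + 2*h) = \<phi> x"
    and diff: "\<forall>x. \<phi> differentiable (at x)"
    and cont_deriv: "continuous_on UNIV (deriv \<phi>)"
    and core: "\<forall>x. \<bar>x\<bar> < h/4 \<longrightarrow> \<phi> x = A * sin (k * x)"
    and actR: "\<forall>x. h/4 \<le> x \<and> x \<le> 3*h/4 \<longrightarrow>
                 \<phi> x = C + D * sin (k * (x - h/2)) + E * cos (k * (x - h/2))"
    and actL: "\<forall>x. h/4 \<le> -x \<and> -x \<le> 3*h/4 \<longrightarrow>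
                 \<phi> x = - C + D * sin (k * (x + h/2)) - E * cos (k * (x + h/2))"
    and bufR: "\<forall>x. 3*h/4 \<le> x \<and> x \<le> h \<longrightarrow> \<phi> x = B * sin (k * (x - h))"
    and bufL: "\<forall>x. 3*h/4 \<le> -x \<and> -x \<le> h \<longrightarrow> \<phi> x = B * sin (k * (x + h))"
    and sol: "patch_solution K \<mu> h H (\<lambda>x t. exp (- K * k^2 * t) * \<phi> x)"
  shows "sin (k*h/2) * (2 / (k*h) * sin (k*h/2) + (k^2 * h^2 / \<mu> - 1) * cos (k*h/2)) = 0"
proof -
  define sn where "sn = sin (k*h/4)"
  define cs where "cs = cos (k*h/4)"
  have dphi: "\<And>x. (\<phi> has_real_derivative deriv \<phi> x) (at x)"
    using diff DERIV_deriv_iff_real_differentiable by blast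
  have cphi: "\<And>x. isCont \<phi> x" using dphi DERIV_isCont by blast
  have a1: "k * (h/4 - h/2) = - (k*h/4)" by (simp add: algebra_simps)
  have a2: "k * (3*h/4 - h/2) = k*h/4" by (simp add: algebra_simps)
  have a3: "k * (3*h/4 - h) = - (k*h/4)" by (simp add: algebra_simps)
  have v1: "\<phi> (h/4) = A * sin (k*(h/4))"
    by (rule value_match[where \<phi>=\<phi> and p="h/4" and f="\<lambda>x. A * sin (k*x)" and a=0])
      (use h core in \<open>auto intro!: continuous_intros cphi\<close>)
  have eq1: "A * sn = C - D * sn + E * cs"
    using v1 actR[rule_format, of "h/4"] h a1 by (simp add: sn_def cs_def)
  have eq2: "A * cs = D * cs + E * sn"
  proof -
    have "A * (cos (k*(h/4)) * k) = D * (cos (k*(h/4 - h/2)) * k) - E * (sin (k*(h/4 - h/2)) * k)"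
    proof (rule deriv_match[OF dphi, of "\<lambda>x. A * sin (k*x)" _ "h/4"
          "\<lambda>x. C + D * sin (k * (x - h/2)) + E * cos (k * (x - h/2))" _ 0 "3*h/4"])
      show "((\<lambda>x. A * sin (k*x)) has_real_derivative A * (cos (k*(h/4)) * k)) (at (h/4))"
        by (auto intro!: derivative_eq_intros)
      show "((\<lambda>x. C + D * sin (k * (x - h/2)) + E * cos (k * (x - h/2))) has_real_derivative
          D * (cos (k*(h/4 - h/2)) * k) - E * (sin (k*(h/4 - h/2)) * k)) (at (h/4))"
        by (auto intro!: derivative_eq_intros)
      show "\<forall>x\<in>{0..h/4}. \<phi> x = A * sin (k*x)"
        using core v1 by (auto simp: less_eq_real_def)
      show "\<forall>x\<in>{h/4..3*h/4}. \<phi> x = C + D * sin (k * (x - h/2)) + E * cos (k * (x - h/2))"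
        using actR by auto
    qed (use h in auto)
    then have "k * (A * cs) = k * (D * cs + E * sn)" using a1 by (simp add: sn_def cs_def algebra_simps)
    then show ?thesis using k by simp
  qed
  have eq3: "C + D * sn + E * cs = - B * sn"
    using actR[rule_format, of "3*h/4"] bufR[rule_format, of "3*h/4"] h a2 a3
    by (simp add: sn_def cs_def)
  have eq4: "D * cs - E * sn = B * cs"
  proof -
    have "D * (cos (k*(3*h/4 - h/2)) * k) - E * (sin (k*(3*h/4 - h/2)) * k) = B * (cos (k*(3*h/4 - h)) * k)"
    proof (rule deriv_match[OF dphi, of "\<lambda>x. C + D * sin (k * (x - h/2)) + E * cos (k * (x - h/2))" _ "3*h/4"
          "\<lambda>x. B * sin (k * (x - h))" _ "h/4" h])
      show "((\<lambda>x. B * sin (k * (x - h))) has_real_derivative B * (cos (k*(3*h/4 - h)) * k)) (at (3*h/4))"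
        by (auto intro!: derivative_eq_intros)
      show "((\<lambda>x. C + D * sin (k * (x - h/2)) + E * cos (k * (x - h/2))) has_real_derivative
          D * (cos (k*(3*h/4 - h/2)) * k) - E * (sin (k*(3*h/4 - h/2)) * k)) (at (3*h/4))"
        by (auto intro!: derivative_eq_intros)
      show "\<forall>x\<in>{3*h/4..h}. \<phi> x = B * sin (k * (x - h))"
        using bufR by auto
      show "\<forall>x\<in>{h/4..3*h/4}. \<phi> x = C + D * sin (k * (x - h/2)) + E * cos (k * (x - h/2))"
        using actR by auto
    qed (use h in auto)
    then have "k * (D * cs - E * sn) = k * (B * cs)" using a2 a3 by (simp add: sn_def cs_def algebra_simps)
    then show ?thesis using k by simp
  qed
  have intcore: "integral {-h/4..h/4} \<phi> = 0"
  proof -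
    have r: "integral {-(h/4)..-(-(h/4))} (\<lambda>x. \<phi> (-x)) = integral {-(h/4)..h/4} \<phi>"
      using Henstock_Kurzweil_Integration.integral_reflect_real[where a="-(h/4)" and b="h/4" and f=\<phi>] by simp
    have "integral {-h/4..h/4} \<phi> = integral {-(h/4)..-(-(h/4))} (\<lambda>x. \<phi> (-x))"
      using r by simp
    also have "\<dots> = integral {-h/4..h/4} (\<lambda>x. - \<phi> x)" using odd by simp
    also have "\<dots> = - integral {-h/4..h/4} \<phi>" by (simp add: integral_neg)
    finally show ?thesis by simp
  qed
  have intact: "integral {h/4..3*h/4} \<phi> = C * (h/2) + 2 * E * sn / k"
  proof -
    define F where "F = (\<lambda>x. C * x - D / k * cos (k * (x - h/2)) + E / k * sin (k * (x - h/2)))"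
    have "((\<lambda>x. C + D * sin (k * (x - h/2)) + E * cos (k * (x - h/2))) has_integral
           (F (3*h/4) - F (h/4))) {h/4..3*h/4}"
    proof (rule fundamental_theorem_of_calculus)
      show "h/4 \<le> 3*h/4" using h by simp
      fix x assume "x \<in> {h/4..3*h/4}"
      have "(F has_real_derivative C + D * sin (k * (x - h/2)) + E * cos (k * (x - h/2))) (at x)"
        unfolding F_def using k by (auto intro!: derivative_eq_intros simp: field_simps)
      then show "(F has_vector_derivative C + D * sin (k * (x - h/2)) + E * cos (k * (x - h/2)))
          (at x within {h/4..3*h/4})"
        by (simp add: has_real_derivative_iff_has_vector_derivative has_vector_derivative_at_within)
    qed
    moreover have "F (3*h/4) - F (h/4) = C * (h/2) + 2 * E * sn / k"
      unfolding F_def sn_def using a1 a2 by (simp add: field_simps)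
    ultimately have "(\<phi> has_integral (C * (h/2) + 2 * E * sn / k)) {h/4..3*h/4}"
      using actR by (auto intro: has_integral_eq)
    then show ?thesis by (rule integral_unique)
  qed
  have P: "\<forall>t x. patch_region h x \<longrightarrow>
        (\<exists>Txx. (deriv (\<lambda>y. exp (- K * k^2 * t) * \<phi> y) has_real_derivative Txx) (at x) \<and>
               ((\<lambda>s. exp (- K * k^2 * s) * \<phi> x) has_real_derivative
                 (K * Txx + K * \<mu> / h^2 * patch_g h H (\<lambda>x t. exp (- K * k^2 * t) * \<phi> x) x t)) (at t))"
    using sol unfolding patch_solution_def by blast
  have reg: "patch_region h (h/2)" using h by (simp add: patch_region_def)
  define G where "G = patch_g h H (\<lambda>x t. exp (- K * k^2 * t) * \<phi> x) (h/2) 0"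
  obtain Txx where T1: "(deriv \<phi> has_real_derivative Txx) (at (h/2))"
    and T2: "((\<lambda>s. exp (- K * k^2 * s) * \<phi> (h/2)) has_real_derivative (K * Txx + K * \<mu> / h^2 * G)) (at 0)"
    using P[rule_format, OF reg, of 0] unfolding G_def by auto
  have Gv: "G = - (2 / h) * (C * (h/2) + 2 * E * sn / k)"
  proof -
    have "core_avg h (\<lambda>x t. exp (- K * k^2 * t) * \<phi> x) 0 = 0"
      unfolding core_avg_def using intcore by simp
    then show ?thesis unfolding G_def patch_g_def T_int_def using h intact by simp
  qed
  define psi where "psi = (\<lambda>y. D * (cos (k * (y - h/2)) * k) - E * (sin (k * (y - h/2)) * k))"
  have dpsi: "deriv \<phi> y = psi y" if "y \<in> {h/4<..<3*h/4}" for y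
  proof (rule DERIV_imp_deriv)
    have "((\<lambda>x. C + D * sin (k * (x - h/2)) + E * cos (k * (x - h/2))) has_real_derivative psi y) (at y)"
      unfolding psi_def by (auto intro!: derivative_eq_intros)
    then show "(\<phi> has_real_derivative psi y) (at y)"
      by (rule has_field_derivative_transform_within_open[where S="{h/4<..<3*h/4}"])
        (use that actR in auto)
  qed
  have "(psi has_real_derivative - (k^2 * E)) (at (h/2))"
    unfolding psi_def by (auto intro!: derivative_eq_intros simp: power2_eq_square)
  then have "(deriv \<phi> has_real_derivative - (k^2 * E)) (at (h/2))"
    by (rule has_field_derivative_transform_within_open[where S="{h/4<..<3*h/4}"])
      (use h dpsi in auto)
  then have Txxv: "Txx = - (k^2 * E)" using T1 DERIV_unique by blast
  have ph2: "\<phi> (h/2) = C + E" using actR[rule_format, of "h/2"] h by simp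
  have "((\<lambda>s. exp (- K * k^2 * s) * \<phi> (h/2)) has_real_derivative (- K * k^2) * \<phi> (h/2)) (at 0)"
    by (auto intro!: derivative_eq_intros)
  then have "- K * k^2 * (C + E) = K * (- (k^2 * E)) + K * \<mu> / h^2 * G"
    using T2 DERIV_unique Txxv ph2 by metis
  then have "K * (k^2 * h^2 * C) = K * (\<mu> * (C + 4 * E * sn / (k*h)))"
    using Gv h k by (simp add: field_simps power2_eq_square)
  then have eq5: "k^2 * h^2 * C = \<mu> * (C + 4 * E * sn / (k*h))" using K by simp
  have S: "sin (k*h/2) = 2 * sn * cs"
  proof -
    have "k*h/2 = 2 * (k*h/4)" by simp
    then show ?thesis unfolding sn_def cs_def by (simp only: sin_double)
  qed
  have Cc: "cos (k*h/2) = cs^2 - sn^2"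
  proof -
    have "k*h/2 = 2 * (k*h/4)" by simp
    then show ?thesis unfolding sn_def cs_def by (simp only: cos_double)
  qed
  show ?thesis
  proof (cases "sn = 0 \<or> cs = 0")
    case True
    then show ?thesis using S by auto
  next
    case False
    then have sn0: "sn \<noteq> 0" and cs0: "cs \<noteq> 0" by auto
    have "(A + B) * cs = (2 * D) * cs" using eq2 eq4 by (simp add: algebra_simps)
    then have ab1: "A + B = 2 * D" using cs0 by simp
    have "(A + B) * sn = (- 2 * D) * sn" using eq1 eq3 by (simp add: algebra_simps)
    then have ab2: "A + B = - 2 * D" using sn0 mult_right_cancel by blast
    have D0: "D = 0" using ab1 ab2 by simp
    have B: "B = - A" using ab1 D0 by simp
    have hA: "A * cs = E * sn" using eq2 D0 by simp
    have hC: "C * cs = - E * (cs^2 - sn^2)"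
    proof -
      have "C = A * sn - E * cs" using eq1 D0 by simp
      then have "C * cs = (A * cs) * sn - E * cs^2" by (simp add: power2_eq_square) (simp add: algebra_simps)
      then show ?thesis using hA by (simp add: algebra_simps power2_eq_square)
    qed
    have kh: "k * h > 0" using k h by simp
    have "k^2 * h^2 * (C * cs) = \<mu> * (C * cs) + \<mu> * 2 * E * (2 * sn * cs) / (k*h)"
    proof -
      have "k^2 * h^2 * C * cs = \<mu> * (C + 4 * E * sn / (k*h)) * cs" using eq5 by simp
      then show ?thesis by (simp add: algebra_simps)
    qed
    then have "- E * (cs^2 - sn^2) * (k^2 * h^2) = - \<mu> * E * (cs^2 - sn^2) + \<mu> * 2 * E * sin (k*h/2) / (k*h)"
      using hC S by (simp add: algebra_simps)
    then have "- E * cos (k*h/2) * (k*h)^2 = - \<mu> * E * cos (k*h/2) + \<mu> * 2 * E * sin (k*h/2) / (k*h)"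
      using Cc by (simp add: power_mult_distrib)
    from alg_final[OF mu kh this]
    have EX: "E * (2 / (k*h) * sin (k*h/2) + (k^2 * h^2 / \<mu> - 1) * cos (k*h/2)) = 0"
      by (simp add: power_mult_distrib)
    have E0: "E \<noteq> 0"
    proof
      assume E: "E = 0"
      have A0: "A = 0" using hA E cs0 by simp
      have C0: "C = 0" using hC E cs0 by simp
      have zero: "\<phi> x = 0" if xb: "-h \<le> x" "x \<le> h" for x
      proof -
        consider "\<bar>x\<bar> < h/4" | "h/4 \<le> x \<and> x \<le> 3*h/4" | "h/4 \<le> -x \<and> -x \<le> 3*h/4"
          | "3*h/4 \<le> x \<and> x \<le> h" | "3*h/4 \<le> -x \<and> -x \<le> h" using xb by linarith
        then show ?thesis using core actR actL bufR bufL A0 B C0 D0 E by cases auto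
      qed
      obtain x where x: "\<phi> x \<noteq> 0" using nonzero by blast
      define z where "z = \<lfloor>(x + h) / (2*h)\<rfloor>"
      define y where "y = x - 2*h*real_of_int z"
      have "real_of_int z \<le> (x + h) / (2*h)" "(x + h) / (2*h) < real_of_int z + 1"
        unfolding z_def by linarith+
      then have "2*h*real_of_int z \<le> x + h" "x + h < 2*h*real_of_int z + 2*h"
        using h by (simp_all add: field_simps)
      then have "-h \<le> y" "y \<le> h" unfolding y_def by linarith+
      then have "\<phi> y = 0" by (rule zero)
      moreover have "\<phi> x = \<phi> y" using periodic_int[OF periodic, of y z] unfolding y_def by simp
      ultimately show False using x by simp
    qed
    then show ?thesis using EX by simp
  qed
qed

end
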